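(* Let $m\ge\ell\ge k\ge 1$ and let ${\mathcal{C}}={\mathcal{C}}[\ell+m,\ell,k]$ be the recursive code with all design parameters equal to $0$. Suppose that for every admissible triple $(n,\ell,k)$ a map ${\mathcal{D}}^{\mathcal{K}}_{n,\ell,k}$ from subspaces of the ambient space to ${\mathcal{K}}[n,\ell,k]\cup\{?\}$ is given which, on input $U$, returns $V\in{\mathcal{K}}[n,\ell,k]$ if $d(U,V)<\ell-k+1$ for some $V\in{\mathcal{K}}[n,\ell,k]$, and returns $?$ otherwise. Define the decoder ${\mathcal{D}}_{\ell+m,\ell,k}$ recursively: on input $U\subseteq W$, let $Z={\mathcal{D}}^{\mathcal{K}}_{\ell+m,\ell,k}(U)$; if $Z=?$ and $m\ge 2\ell$, let $U'=U|_{\mathbb{F}}$ and $V'={\mathcal{D}}_{m,\ell,k}(U')$, and if $V'\neq ?$ set $Z=\{0^\ell\}\times V'$; return $Z$. Let $V\in{\mathcal{C}}$ be transmitted and $U\subseteq W$ received, with $\dim U=\ell-\kappa+\gamma$ and $\dim(U\cap V)=\ell-\kappa$. If $\kappa+\gamma<\ell-k+1$, then ${\mathcal{D}}_{\ell+m,\ell,k}(U)=V$.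
   Context: Let $q$ be a prime power. Subspace distance: $d(U,V)=\dim U+\dim V-2\dim(U\cap V)$. For $W=\langle A\rangle\times\mathbb{F}$ and a subspace $U\subseteq W$, $U|_{\mathbb{F}}=\{v_2 : (v_1,v_2)\in U\}$. Kötter–Kschischang code ${\mathcal{K}}[n,\ell,k]$ (for $n-\ell \ge \ell \ge k \ge 1$): put $m=n-\ell$, $\mathbb{F}=\mathbb{F}_{q^m}$, fix $\mathbb{F}_q$-linearly independent $\alpha_1,\dots,\alpha_\ell \in \mathbb{F}$, let $\langle A\rangle$ be their $\mathbb{F}_q$-span and $W = \langle A\rangle \times \mathbb{F}$. For a linearized polynomial $f(x)=\sum_{i=0}^{k-1} f_i x^{q^i}$ with $f_i\in\mathbb{F}$, let ${\mathcal{E}}(f)=\mathrm{span}_{\mathbb{F}_q}\{(\alpha_i,f(\alpha_i)) : 1\le i\le \ell\}$, and ${\mathcal{K}}[n,\ell,k]=\{{\mathcal{E}}(f)\}$. Distinct elements of ${\mathcal{K}}$ intersect in dimension at most $k-1$. Any $n$-dimensional $\mathbb{F}_q$-space is identified with such a $W$ via a fixed linear isomorphism. Recursive code with all design parameters $0$: ${\mathcal{C}}[\ell+m,\ell,k]$ (for $m\ge\ell\ge k$) in $W=\langle A\rangle\times\mathbb{F}_{q^m}$ is defined by: if $m<2\ell$, ${\mathcal{C}}={\mathcal{K}}[\ell+m,\ell,k]$; otherwise, letting ${\mathcal{C}}[m,\ell,k]=\{U_1,\dots,U_N\}$ be the recursively constructed code inside $\mathbb{F}_{q^m}$ (viewed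 as an $m$-dimensional $\mathbb{F}_q$-space), ${\mathcal{C}}[\ell+m,\ell,k]={\mathcal{K}}[\ell+m,\ell,k]\cup\{\{0\}\times U_\sigma : 1\le\sigma\le N\}$. *)

theory Defs
  imports Main
begin

text \<open>All fields F_{q^j} used are modelled as finite subfields of one ambient field of
type 'a; the scalar field F_q is a finite subfield Fq of 'a, and q = card Fq.
Vectors of an ambient space W = <A> x F_{q^j} are pairs in 'a x 'a.\<close>

definition is_subfield :: "'a::field set \<Rightarrow> bool" where
  "is_subfield S \<longleftrightarrow> 0 \<in> S \<and> 1 \<in> S \<and>
     (\<forall>x\<in>S. \<forall>y\<in>S. x + y \<in> S \<and> x * y \<in> S) \<and>
     (\<forall>x\<in>S. - x \<in> S) \<and> (\<forall>x\<in>S. x \<noteq> 0 \<longrightarrow> inverse x \<in> S)"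

definition fq_subspace :: "'a::field set \<Rightarrow> ('a \<times> 'a) set \<Rightarrow> bool" where
  "fq_subspace Fq U \<longleftrightarrow> (0, 0) \<in> U \<and>
     (\<forall>u\<in>U. \<forall>v\<in>U. (fst u + fst v, snd u + snd v) \<in> U) \<and>
     (\<forall>c\<in>Fq. \<forall>u\<in>U. (c * fst u, c * snd u) \<in> U)"

definition fq_lincomb :: "(nat \<Rightarrow> 'a::field) \<Rightarrow> ('a \<times> 'a) list \<Rightarrow> 'a \<times> 'a" where
  "fq_lincomb cs vs = ((\<Sum>i<length vs. cs i * fst (vs ! i)), (\<Sum>i<length vs. cs i * snd (vs ! i)))"

definition fq_span :: "'a::field set \<Rightarrow> ('a \<times> 'a) list \<Rightarrow> ('a \<times> 'a) set" where
  "fq_span Fq vs = {fq_lincomb cs vs | cs. \<forall>i<length vs. cs i \<in> Fq}"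

definition fq_dim :: "'a::field set \<Rightarrow> ('a \<times> 'a) set \<Rightarrow> nat" where
  "fq_dim Fq U = (LEAST n. \<exists>vs. length vs = n \<and> fq_span Fq vs = U)"

definition subspace_dist :: "'a::field set \<Rightarrow> ('a \<times> 'a) set \<Rightarrow> ('a \<times> 'a) set \<Rightarrow> int" where
  "subspace_dist Fq U V = int (fq_dim Fq U) + int (fq_dim Fq V) - 2 * int (fq_dim Fq (U \<inter> V))"

text \<open>F_q-linear independence of alpha_0, ..., alpha_{l-1} (indices shifted to start at 0).\<close>
definition fq_indep :: "'a::field set \<Rightarrow> nat \<Rightarrow> (nat \<Rightarrow> 'a) \<Rightarrow> bool" where
  "fq_indep Fq l \<alpha> \<longleftrightarrow> (\<forall>c. (\<forall>i<l. c i \<in> Fq) \<longrightarrow> (\<Sum>i<l. c i * \<alpha> i) = 0 \<longrightarrow> (\<forall>i<l. c i = 0))"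

definition span_A :: "'a::field set \<Rightarrow> nat \<Rightarrow> (nat \<Rightarrow> 'a) \<Rightarrow> 'a set" where
  "span_A Fq l \<alpha> = {(\<Sum>i<l. c i * \<alpha> i) | c. \<forall>i<l. c i \<in> Fq}"

definition ambient :: "'a::field set \<Rightarrow> 'a set \<Rightarrow> nat \<Rightarrow> (nat \<Rightarrow> 'a) \<Rightarrow> ('a \<times> 'a) set" where
  "ambient Fq F l \<alpha> = span_A Fq l \<alpha> \<times> F"

definition lin_eval :: "'a::field set \<Rightarrow> nat \<Rightarrow> (nat \<Rightarrow> 'a) \<Rightarrow> 'a \<Rightarrow> 'a" where
  "lin_eval Fq k f x = (\<Sum>i<k. f i * x ^ (card Fq ^ i))"

definition KK_E :: "'a::field set \<Rightarrow> nat \<Rightarrow> (nat \<Rightarrow> 'a) \<Rightarrow> nat \<Rightarrow> (nat \<Rightarrow> 'a) \<Rightarrow> ('a \<times> 'a) set" where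
  "KK_E Fq l \<alpha> k f = fq_span Fq (map (\<lambda>i. (\<alpha> i, lin_eval Fq k f (\<alpha> i))) [0..<l])"

definition KK_code :: "'a::field set \<Rightarrow> 'a set \<Rightarrow> nat \<Rightarrow> (nat \<Rightarrow> 'a) \<Rightarrow> nat \<Rightarrow> ('a \<times> 'a) set set" where
  "KK_code Fq F l \<alpha> k = {KK_E Fq l \<alpha> k f | f. \<forall>i<k. f i \<in> F}"

text \<open>Data indexed by the extension degree j of the second factor:
  F j = F_{q^j}, \<alpha> j the chosen basis elements of <A> in F_{q^j},
  \<phi> j : F_{q^j} \<rightarrow> <A_{j-l}> x F_{q^{j-l}} the fixed F_q-linear isomorphism.
  The recursive code C[l+j, l, k] (all design parameters 0).\<close>
fun rec_code :: "'a::field set \<Rightarrow> (nat \<Rightarrow> 'a set) \<Rightarrow> (nat \<Rightarrow> nat \<Rightarrow> 'a) \<Rightarrow> (nat \<Rightarrow> 'a \<Rightarrow> 'a \<times> 'a)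
      \<Rightarrow> nat \<Rightarrow> nat \<Rightarrow> nat \<Rightarrow> ('a \<times> 'a) set set" where
  "rec_code Fq F \<alpha> \<phi> l k j =
     (if 0 < l \<and> 2 * l \<le> j
      then KK_code Fq (F j) l (\<alpha> j) k \<union>
           {{0} \<times> (inv_into (F j) (\<phi> j) ` U) | U. U \<in> rec_code Fq F \<alpha> \<phi> l k (j - l)}
      else KK_code Fq (F j) l (\<alpha> j) k)"

text \<open>The recursive decoder D_{l+j,l,k}; DK j is the given bounded-distance decoder for
  K[l+j,l,k]; None plays the role of the failure symbol ?.\<close>
fun rec_dec :: "(nat \<Rightarrow> 'a set) \<Rightarrow> (nat \<Rightarrow> 'a \<Rightarrow> 'a \<times> 'a) \<Rightarrow> nat
      \<Rightarrow> (nat \<Rightarrow> ('a \<times> 'a) set \<Rightarrow> ('a \<times> 'a) set option)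
      \<Rightarrow> nat \<Rightarrow> ('a::zero \<times> 'a) set \<Rightarrow> ('a \<times> 'a) set option" where
  "rec_dec F \<phi> l DK j U =
     (case DK j U of
        Some Z \<Rightarrow> Some Z
      | None \<Rightarrow>
          (if 0 < l \<and> 2 * l \<le> j then
             (case rec_dec F \<phi> l DK (j - l) (\<phi> j ` (snd ` U)) of
                Some V' \<Rightarrow> Some ({0} \<times> (inv_into (F j) (\<phi> j) ` V'))
              | None \<Rightarrow> None)
           else None))"

text \<open>Extension degrees j = m - i l occurring in the recursion for C[l+m,l,k].\<close>
definition levels :: "nat \<Rightarrow> nat \<Rightarrow> nat set" where
  "levels m l = {j. \<exists>i. i * l + l \<le> m \<and> j = m - i * l}"

end

theory Submission
  imports Defs "HOL-Library.Product_Plus" "HOL-Library.FuncSet"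
begin


declare rec_dec.simps[simp del] rec_code.simps[simp del]

definition sc :: "'a::field \<Rightarrow> 'a \<times> 'a \<Rightarrow> 'a \<times> 'a" where
  "sc c v = (c * fst v, c * snd v)"

lemma zero_pair: "(0::'b::zero, 0::'c::zero) = 0" by (simp add: zero_prod_def)

lemma sc_simps[simp]: "fst (sc c v) = c * fst v" "snd (sc c v) = c * snd v"
  by (auto simp: sc_def)

lemma sc_add: "sc c (u + v) = sc c u + sc c v" by (simp add: sc_def prod_eq_iff algebra_simps)
lemma sc_mult: "sc c (sc d v) = sc (c*d) v" by (simp add: sc_def)
lemma sc_one[simp]: "sc 1 v = v" by (simp add: sc_def)
lemma sc_zero[simp]: "sc 0 v = 0" "sc c 0 = 0" by (simp_all add: sc_def zero_prod_def)
lemma sc_addl: "sc (c + d) v = sc c v + sc d v" by (simp add: sc_def prod_eq_iff algebra_simps)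
lemma sc_minus1: "sc (-1) v = - v" by (simp add: sc_def prod_eq_iff)

lemma subfield_facts:
  assumes "is_subfield S"
  shows "0 \<in> S" "1 \<in> S" "x \<in> S \<Longrightarrow> y \<in> S \<Longrightarrow> x + y \<in> S" "x \<in> S \<Longrightarrow> y \<in> S \<Longrightarrow> x * y \<in> S"
    "x \<in> S \<Longrightarrow> - x \<in> S" "x \<in> S \<Longrightarrow> inverse x \<in> S"
    "x \<in> S \<Longrightarrow> y \<in> S \<Longrightarrow> x - y \<in> S"
  using assms unfolding is_subfield_def
  by (auto simp: inverse_nonzero_iff_nonzero) (metis diff_conv_add_uminus)

lemma subfield_sum: "is_subfield S \<Longrightarrow> (\<And>i. i \<in> A \<Longrightarrow> f i \<in> S) \<Longrightarrow> sum f A \<in> S"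
  by (induction A rule: infinite_finite_induct) (auto intro: subfield_facts)

lemma subfield_power: "is_subfield S \<Longrightarrow> x \<in> S \<Longrightarrow> x ^ n \<in> S"
  by (induction n) (auto intro: subfield_facts)

lemma fq_lincomb_alt: "fq_lincomb cs vs = (\<Sum>i<length vs. sc (cs i) (vs ! i))"
  by (simp add: fq_lincomb_def fst_sum snd_sum prod_eq_iff)

lemma fq_subspace_iff: "fq_subspace Fq U \<longleftrightarrow> 0 \<in> U \<and> (\<forall>u\<in>U. \<forall>v\<in>U. u + v \<in> U) \<and> (\<forall>c\<in>Fq. \<forall>u\<in>U. sc c u \<in> U)"
  by (simp add: fq_subspace_def zero_prod_def sc_def plus_prod_def)

lemma span_Nil: "fq_span Fq [] = {0}"
  by (simp add: fq_span_def fq_lincomb_alt)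

lemma span_Cons:
  assumes "0 \<in> Fq"
  shows "fq_span Fq (v # vs) = {sc c v + x | c x. c \<in> Fq \<and> x \<in> fq_span Fq vs}"
proof (intro set_eqI iffI)
  fix y assume "y \<in> fq_span Fq (v # vs)"
  then obtain cs where cs: "\<forall>i<Suc (length vs). cs i \<in> Fq" "y = fq_lincomb cs (v # vs)"
    by (auto simp: fq_span_def)
  have "y = sc (cs 0) v + fq_lincomb (\<lambda>i. cs (Suc i)) vs"
    unfolding cs fq_lincomb_alt by (simp only: length_Cons sum.lessThan_Suc_shift) simp
  moreover have "fq_lincomb (\<lambda>i. cs (Suc i)) vs \<in> fq_span Fq vs"
    using cs by (auto simp: fq_span_def)
  moreover have "cs 0 \<in> Fq" using cs by auto
  ultimately show "y \<in> {sc c v + x | c x. c \<in> Fq \<and> x \<in> fq_span Fq vs}" by blast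
next
  fix y assume "y \<in> {sc c v + x | c x. c \<in> Fq \<and> x \<in> fq_span Fq vs}"
  then obtain c ds where d: "c \<in> Fq" "\<forall>i<length vs. ds i \<in> Fq" "y = sc c v + fq_lincomb ds vs"
    by (auto simp: fq_span_def)
  define cs where "cs = (\<lambda>i. if i = 0 then c else ds (i - 1))"
  have "y = fq_lincomb cs (v # vs)"
    unfolding d fq_lincomb_alt by (simp only: length_Cons sum.lessThan_Suc_shift) (simp add: cs_def)
  moreover have "\<forall>i<length (v # vs). cs i \<in> Fq" using d by (auto simp: cs_def)
  ultimately show "y \<in> fq_span Fq (v # vs)" by (auto simp: fq_span_def)
qed

lemma span_subspace:
  assumes "is_subfield Fq"
  shows "fq_subspace Fq (fq_span Fq vs)"
proof (induction vs)
  case Nil then show ?case by (simp add: fq_subspace_iff span_Nil)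
next
  case (Cons v vs)
  have F: "0 \<in> Fq" using subfield_facts[OF assms] by auto
  show ?case unfolding fq_subspace_iff span_Cons[OF F]
  proof (intro conjI ballI)
    have "0 = sc 0 v + (0::'a\<times>'a)" by simp
    then show "0 \<in> {sc c v + x | c x. c \<in> Fq \<and> x \<in> fq_span Fq vs}"
      using Cons F unfolding fq_subspace_iff by blast
  next
    fix u w assume "u \<in> {sc c v + x | c x. c \<in> Fq \<and> x \<in> fq_span Fq vs}"
      "w \<in> {sc c v + x | c x. c \<in> Fq \<and> x \<in> fq_span Fq vs}"
    then obtain c x c' x' where "c \<in> Fq" "x \<in> fq_span Fq vs" "u = sc c v + x"
      "c' \<in> Fq" "x' \<in> fq_span Fq vs" "w = sc c' v + x'" by blast
    moreover have "u + w = sc (c + c') v + (x + x')"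
      using calculation by (simp add: sc_addl algebra_simps)
    moreover have "x + x' \<in> fq_span Fq vs" "c + c' \<in> Fq"
      using calculation Cons subfield_facts[OF assms] by (auto simp: fq_subspace_iff)
    ultimately show "u + w \<in> {sc c v + x | c x. c \<in> Fq \<and> x \<in> fq_span Fq vs}"
      by blast
  next
    fix d u assume "d \<in> Fq" "u \<in> {sc c v + x | c x. c \<in> Fq \<and> x \<in> fq_span Fq vs}"
    then obtain c x where "c \<in> Fq" "x \<in> fq_span Fq vs" "u = sc c v + x" by blast
    moreover have "sc d u = sc (d * c) v + sc d x"
      using calculation by (simp add: sc_add sc_mult)
    moreover have "sc d x \<in> fq_span Fq vs" "d * c \<in> Fq"
      using calculation Cons subfield_facts[OF assms] \<open>d \<in> Fq\<close> by (auto simp: fq_subspace_iff)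
    ultimately show "sc d u \<in> {sc c v + x | c x. c \<in> Fq \<and> x \<in> fq_span Fq vs}"
      by blast
  qed
qed

lemma subspace_minus:
  assumes "is_subfield Fq" "fq_subspace Fq U" "u \<in> U" "v \<in> U"
  shows "u - v \<in> U" "- v \<in> U"
proof -
  have "- v = sc (-1) v" by (simp add: sc_minus1)
  then show "- v \<in> U" using assms subfield_facts[OF assms(1)] by (auto simp: fq_subspace_iff)
  then show "u - v \<in> U" using assms by (auto simp: fq_subspace_iff)
qed

lemma span_in_subspace:
  assumes "is_subfield Fq" "fq_subspace Fq S" "set vs \<subseteq> S"
  shows "fq_span Fq vs \<subseteq> S"
  using assms(3)
proof (induction vs)
  case Nil then show ?case using assms by (simp add: span_Nil fq_subspace_iff)
next
  case (Cons v vs)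
  then show ?case using assms subfield_facts[OF assms(1)]
    by (auto simp: span_Cons fq_subspace_iff)
qed

lemma in_span:
  assumes "is_subfield Fq" "x \<in> set vs"
  shows "x \<in> fq_span Fq vs"
  using assms(2)
proof (induction vs)
  case Nil then show ?case by simp
next
  case (Cons v vs)
  have F: "0 \<in> Fq" "1 \<in> Fq" using subfield_facts[OF assms(1)] by auto
  have z: "0 \<in> fq_span Fq vs" using span_subspace[OF assms(1)] by (auto simp: fq_subspace_iff)
  show ?case
  proof (cases "x = v")
    case True
    have "v = sc 1 v + 0" by simp
    then show ?thesis unfolding span_Cons[OF F(1)] True
      using F z by blast
  next
    case False
    have "x = sc 0 v + x" by simp
    then show ?thesis unfolding span_Cons[OF F(1)]
      using F Cons False by (metis (mono_tags, lifting) mem_Collect_eq set_ConsD)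
  qed
qed

lemma subspace_has_span:
  assumes "is_subfield Fq" "fq_subspace Fq S" "finite S"
  shows "\<exists>vs. fq_span Fq vs = S"
proof -
  obtain vs where "set vs = S" using finite_list[OF assms(3)] by blast
  then show ?thesis using span_in_subspace[OF assms(1,2)] in_span[OF assms(1)] by blast
qed



lemma sc_diffl: "sc (c - d) v = sc c v - sc d v" by (simp add: sc_def prod_eq_iff algebra_simps)

lemma span_Cons_image:
  assumes "0 \<in> Fq"
  shows "fq_span Fq (v # vs) = (\<lambda>(c,x). sc c v + x) ` (Fq \<times> fq_span Fq vs)"
  unfolding span_Cons[OF assms] by auto

lemma span_card:
  assumes SF: "is_subfield Fq" and FF: "finite Fq"
  shows "\<exists>ws. length ws \<le> length vs \<and> fq_span Fq ws = fq_span Fq vs \<and>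
              finite (fq_span Fq vs) \<and> card (fq_span Fq vs) = card Fq ^ length ws"
proof (induction vs)
  case Nil then show ?case by (auto simp: span_Nil)
next
  case (Cons v vs)
  note sf = subfield_facts[OF SF]
  have F0: "0 \<in> Fq" using sf by auto
  from Cons obtain ws where ws: "length ws \<le> length vs" "fq_span Fq ws = fq_span Fq vs"
    "finite (fq_span Fq vs)" "card (fq_span Fq vs) = card Fq ^ length ws" by blast
  define S where "S = fq_span Fq vs"
  have sub: "fq_subspace Fq S" unfolding S_def by (rule span_subspace[OF SF])
  show ?case
  proof (cases "v \<in> S")
    case True
    have "fq_span Fq (v # vs) = S"
    proof
      show "fq_span Fq (v # vs) \<subseteq> S"
        unfolding span_Cons[OF F0] using True sub S_def by (auto simp: fq_subspace_iff)
    next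
      show "S \<subseteq> fq_span Fq (v # vs)"
      proof
        fix x assume "x \<in> S"
        moreover have "x = sc 0 v + x" by simp
        ultimately show "x \<in> fq_span Fq (v # vs)" unfolding span_Cons[OF F0] S_def
          using F0 by blast
      qed
    qed
    then show ?thesis using ws S_def by (intro exI[of _ ws]) auto
  next
    case False
    have inj: "inj_on (\<lambda>(c,x). sc c v + x) (Fq \<times> S)"
    proof (rule inj_onI, clarify)
      fix c x c' x'
      assume a: "c \<in> Fq" "x \<in> S" "c' \<in> Fq" "x' \<in> S" "sc c v + x = sc c' v + x'"
      show "c = c' \<and> x = x'"
      proof (cases "c = c'")
        case True then show ?thesis using a by simp
      next
        case ne: False
        have e: "sc (c - c') v = x' - x" using a(5) by (simp add: sc_diffl algebra_simps)
        have "v = sc (inverse (c - c')) (sc (c - c') v)"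
          using ne by (simp add: sc_mult)
        also have "\<dots> = sc (inverse (c - c')) (x' - x)" using e by simp
        finally have "v \<in> S"
          using a sub subspace_minus[OF SF sub] sf by (auto simp: fq_subspace_iff)
        then show ?thesis using False by simp
      qed
    qed
    have eq: "fq_span Fq (v # ws) = fq_span Fq (v # vs)"
      unfolding span_Cons_image[OF F0] ws(2) ..
    have fin: "finite (fq_span Fq (v # vs))"
      unfolding span_Cons_image[OF F0] using FF ws(3) by auto
    have "card (fq_span Fq (v # vs)) = card (Fq \<times> S)"
      unfolding span_Cons_image[OF F0] S_def[symmetric] using card_image[OF inj] .
    also have "\<dots> = card Fq ^ length (v # ws)" using ws(4) S_def by (simp add: card_cartesian_product)
    finally show ?thesis using eq fin ws(1) by (intro exI[of _ "v # ws"]) auto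
  qed
qed

lemma dim_le_length: "fq_span Fq vs = S \<Longrightarrow> fq_dim Fq S \<le> length vs"
  unfolding fq_dim_def by (rule Least_le) blast

lemma dim_card:
  assumes SF: "is_subfield Fq" and FF: "finite Fq" and S: "fq_subspace Fq S" "finite S"
  shows "card S = card Fq ^ fq_dim Fq S"
proof -
  obtain vs0 where "fq_span Fq vs0 = S" using subspace_has_span[OF SF S] by blast
  then have "\<exists>n vs. length vs = n \<and> fq_span Fq vs = S" by blast
  then have "\<exists>vs. length vs = fq_dim Fq S \<and> fq_span Fq vs = S"
    unfolding fq_dim_def by (rule LeastI_ex)
  then obtain vs where vs: "length vs = fq_dim Fq S" "fq_span Fq vs = S" by blast
  obtain ws where ws: "length ws \<le> length vs" "fq_span Fq ws = S" "card S = card Fq ^ length ws"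
    using span_card[OF SF FF, of vs] vs by auto
  have "fq_dim Fq S \<le> length ws" using dim_le_length[OF ws(2)] .
  then show ?thesis using ws vs by simp
qed

lemma card_Fq_ge2: "is_subfield Fq \<Longrightarrow> finite Fq \<Longrightarrow> 2 \<le> card Fq"
proof -
  assume "is_subfield Fq" "finite Fq"
  then have "{0,1} \<subseteq> Fq" using subfield_facts by auto
  then have "card {0::'a,1} \<le> card Fq" using \<open>finite Fq\<close> by (rule card_mono[rotated])
  then show ?thesis by simp
qed

lemma dim_le_by_card:
  assumes SF: "is_subfield Fq" and FF: "finite Fq"
    and S: "fq_subspace Fq S" "finite S" and T: "fq_subspace Fq T" "finite T"
    and c: "card S \<le> card T"
  shows "fq_dim Fq S \<le> fq_dim Fq T"
proof -
  have "card Fq ^ fq_dim Fq S \<le> card Fq ^ fq_dim Fq T"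
    using c dim_card[OF SF FF S] dim_card[OF SF FF T] by simp
  then show ?thesis using card_Fq_ge2[OF SF FF] by (intro power_le_imp_le_exp) auto
qed



lemma span_A_sub:
  assumes "is_subfield Fj" "Fq \<subseteq> Fj" "\<forall>i<l. \<alpha> i \<in> Fj"
  shows "span_A Fq l \<alpha> \<subseteq> Fj"
proof
  fix x assume "x \<in> span_A Fq l \<alpha>"
  then obtain c where c: "\<forall>i<l. c i \<in> Fq" "x = (\<Sum>i<l. c i * \<alpha> i)" unfolding span_A_def by blast
  show "x \<in> Fj" unfolding c(2)
    by (rule subfield_sum[OF assms(1)]) (use c assms in \<open>auto intro!: subfield_facts(4)[OF assms(1)]\<close>)
qed

lemma zero_span_A: "0 \<in> Fq \<Longrightarrow> 0 \<in> span_A Fq l \<alpha>"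
  unfolding span_A_def by (auto intro!: exI[of _ "\<lambda>_. 0"])

lemma ambient_sub:
  assumes "is_subfield Fj" "Fq \<subseteq> Fj" "\<forall>i<l. \<alpha> i \<in> Fj"
  shows "ambient Fq Fj l \<alpha> \<subseteq> Fj \<times> Fj"
  using span_A_sub[OF assms] unfolding ambient_def by auto

lemma lin_eval_in:
  assumes "is_subfield Fj" "\<forall>i<k. f i \<in> Fj" "x \<in> Fj"
  shows "lin_eval Fq k f x \<in> Fj"
  unfolding lin_eval_def
  by (rule subfield_sum[OF assms(1)]) (use assms in \<open>auto intro!: subfield_facts(4)[OF assms(1)] subfield_power\<close>)

lemma fst_lincomb_KK:
  "fst (fq_lincomb cs (map (\<lambda>i. (\<alpha> i, g (\<alpha> i))) [0..<l])) = (\<Sum>i<l. cs i * \<alpha> i)"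
  "snd (fq_lincomb cs (map (\<lambda>i. (\<alpha> i, g (\<alpha> i))) [0..<l])) = (\<Sum>i<l. cs i * g (\<alpha> i))"
  by (simp_all add: fq_lincomb_def)

lemma KK_E_props:
  assumes SF: "is_subfield Fq" "finite Fq"
    and Fj: "is_subfield Fj" "Fq \<subseteq> Fj" "finite Fj"
    and al: "\<forall>i<l. \<alpha> i \<in> Fj" "fq_indep Fq l \<alpha>"
    and f: "\<forall>i<k. f i \<in> Fj"
  shows "KK_E Fq l \<alpha> k f \<subseteq> ambient Fq Fj l \<alpha>"
    "fq_subspace Fq (KK_E Fq l \<alpha> k f)"
    "finite (KK_E Fq l \<alpha> k f)"
    "fq_dim Fq (KK_E Fq l \<alpha> k f) = l"
    "\<And>y. y \<in> KK_E Fq l \<alpha> k f \<Longrightarrow> fst y = 0 \<Longrightarrow> y = 0"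
proof -
  define vs where "vs = map (\<lambda>i. (\<alpha> i, lin_eval Fq k f (\<alpha> i))) [0..<l]"
  have KE: "KK_E Fq l \<alpha> k f = fq_span Fq vs" by (simp add: KK_E_def vs_def)
  show sub: "KK_E Fq l \<alpha> k f \<subseteq> ambient Fq Fj l \<alpha>"
  proof
    fix y assume "y \<in> KK_E Fq l \<alpha> k f"
    then obtain cs where cs: "\<forall>i<l. cs i \<in> Fq" "y = fq_lincomb cs vs"
      unfolding KE fq_span_def vs_def by auto
    have "fst y \<in> span_A Fq l \<alpha>" unfolding span_A_def using cs
      by (auto simp: vs_def fst_lincomb_KK)
    moreover have "snd y \<in> Fj" unfolding cs(2) vs_def fst_lincomb_KK
    proof (rule subfield_sum[OF Fj(1)])
      fix i assume "i \<in> {..<l}"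
      then show "cs i * lin_eval Fq k f (\<alpha> i) \<in> Fj"
        using cs Fj al f by (intro subfield_facts(4)[OF Fj(1)] lin_eval_in) auto
    qed
    ultimately show "y \<in> ambient Fq Fj l \<alpha>" by (simp add: ambient_def mem_Times_iff)
  qed
  show subsp: "fq_subspace Fq (KK_E Fq l \<alpha> k f)" unfolding KE by (rule span_subspace[OF SF(1)])
  show fin: "finite (KK_E Fq l \<alpha> k f)"
    using sub ambient_sub[OF Fj(1,2) al(1)] Fj(3) finite_subset[of _ "Fj \<times> Fj"] by blast
  show zero: "\<And>y. y \<in> KK_E Fq l \<alpha> k f \<Longrightarrow> fst y = 0 \<Longrightarrow> y = 0"
  proof -
    fix y assume y: "y \<in> KK_E Fq l \<alpha> k f" "fst y = 0"
    then obtain cs where cs: "\<forall>i<l. cs i \<in> Fq" "y = fq_lincomb cs vs"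
      unfolding KE fq_span_def vs_def by auto
    have "fst y = (\<Sum>i<l. cs i * \<alpha> i)" unfolding cs(2) vs_def fst_lincomb_KK ..
    then have "(\<Sum>i<l. cs i * \<alpha> i) = 0" using y(2) by simp
    then have "\<forall>i<l. cs i = 0" using al(2)[unfolded fq_indep_def, rule_format, of cs] cs(1) by blast
    then have "snd y = 0" using cs by (simp add: vs_def fst_lincomb_KK)
    then show "y = 0" using y(2) by (simp add: prod_eq_iff)
  qed
  have le: "fq_dim Fq (KK_E Fq l \<alpha> k f) \<le> l" using dim_le_length[OF KE[symmetric]] by (simp add: vs_def)
  define P where "P = (\<Pi>\<^sub>E i\<in>{..<l}. Fq)"
  have inj: "inj_on (\<lambda>c. fq_lincomb c vs) P"
  proof (rule inj_onI)
    fix c d assume a: "c \<in> P" "d \<in> P" "fq_lincomb c vs = fq_lincomb d vs"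
    then have "fst (fq_lincomb c vs) = fst (fq_lincomb d vs)" by simp
    then have "(\<Sum>i<l. c i * \<alpha> i) = (\<Sum>i<l. d i * \<alpha> i)"
      unfolding vs_def fst_lincomb_KK(1) .
    then have "(\<Sum>i<l. (c i - d i) * \<alpha> i) = 0"
      by (simp add: algebra_simps sum_subtractf)
    moreover have "\<forall>i<l. c i - d i \<in> Fq" using a subfield_facts(7)[OF SF(1)] by (auto simp: P_def)
    ultimately have "\<forall>i<l. c i - d i = 0" using al(2)[unfolded fq_indep_def, rule_format, of "\<lambda>i. c i - d i"] by blast
    then show "c = d" using a(1,2) unfolding P_def by (intro PiE_ext[of c "{..<l}" "\<lambda>_. Fq" d]) auto
  qed
  have img: "(\<lambda>c. fq_lincomb c vs) ` P \<subseteq> KK_E Fq l \<alpha> k f"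
    unfolding KE fq_span_def P_def by (auto simp: vs_def)
  have "card P = card Fq ^ l" unfolding P_def by (simp add: card_PiE)
  then have "card Fq ^ l \<le> card (KK_E Fq l \<alpha> k f)"
    using card_inj_on_le[OF inj img fin] by simp
  then have "card Fq ^ l \<le> card Fq ^ fq_dim Fq (KK_E Fq l \<alpha> k f)"
    using dim_card[OF SF subsp fin] by simp
  then have "l \<le> fq_dim Fq (KK_E Fq l \<alpha> k f)"
    using card_Fq_ge2[OF SF] by (intro power_le_imp_le_exp) auto
  then show "fq_dim Fq (KK_E Fq l \<alpha> k f) = l" using le by simp
qed



lemma phi_lin:
  fixes p :: "'a::field \<Rightarrow> 'a \<times> 'a"
  assumes bij: "bij_betw p A B" and SA: "is_subfield A" and FA: "Fq \<subseteq> A"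
    and add: "\<forall>x\<in>A. \<forall>y\<in>A. p (x + y) = (fst (p x) + fst (p y), snd (p x) + snd (p y))"
    and scal: "\<forall>c\<in>Fq. \<forall>x\<in>A. p (c * x) = (c * fst (p x), c * snd (p x))"
  shows "\<And>x y. x \<in> A \<Longrightarrow> y \<in> A \<Longrightarrow> p (x + y) = p x + p y"
    "\<And>c x. c \<in> Fq \<Longrightarrow> x \<in> A \<Longrightarrow> p (c * x) = sc c (p x)"
    "p 0 = 0" "0 \<in> B"
    "\<And>x. x \<in> B \<Longrightarrow> inv_into A p x \<in> A"
    "\<And>x. x \<in> B \<Longrightarrow> p (inv_into A p x) = x"
    "\<And>x. x \<in> A \<Longrightarrow> inv_into A p (p x) = x"
    "\<And>x y. x \<in> B \<Longrightarrow> y \<in> B \<Longrightarrow> x + y \<in> B"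
    "\<And>c x. c \<in> Fq \<Longrightarrow> x \<in> B \<Longrightarrow> sc c x \<in> B"
    "\<And>x y. x \<in> B \<Longrightarrow> y \<in> B \<Longrightarrow> inv_into A p (x + y) = inv_into A p x + inv_into A p y"
    "\<And>c x. c \<in> Fq \<Longrightarrow> x \<in> B \<Longrightarrow> inv_into A p (sc c x) = c * inv_into A p x"
    "inv_into A p 0 = 0"
proof -
  note sf = subfield_facts[OF SA]
  show a: "\<And>x y. x \<in> A \<Longrightarrow> y \<in> A \<Longrightarrow> p (x + y) = p x + p y" using add by (simp add: plus_prod_def)
  show s: "\<And>c x. c \<in> Fq \<Longrightarrow> x \<in> A \<Longrightarrow> p (c * x) = sc c (p x)" using scal by (simp add: sc_def)
  have "p (0 + 0) = p 0 + p 0" using a[OF sf(1) sf(1)] .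
  then show p0: "p 0 = 0" by simp
  have ap: "\<And>x. x \<in> A \<Longrightarrow> p x \<in> B" by (rule bij_betw_apply[OF bij])
  have im: "p ` A = B" by (rule bij_betw_imp_surj_on[OF bij])
  have ij: "inj_on p A" by (rule bij_betw_imp_inj_on[OF bij])
  show B0: "0 \<in> B" using ap[OF sf(1)] p0 by simp
  show gA: "\<And>x. x \<in> B \<Longrightarrow> inv_into A p x \<in> A" using im inv_into_into by metis
  show pg: "\<And>x. x \<in> B \<Longrightarrow> p (inv_into A p x) = x" using im f_inv_into_f by metis
  show gp: "\<And>x. x \<in> A \<Longrightarrow> inv_into A p (p x) = x" using ij inv_into_f_f by metis
  show Badd: "\<And>x y. x \<in> B \<Longrightarrow> y \<in> B \<Longrightarrow> x + y \<in> B"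
  proof -
    fix x y assume "x \<in> B" "y \<in> B"
    then have "x + y = p (inv_into A p x + inv_into A p y)" using a gA pg by simp
    moreover have "inv_into A p x + inv_into A p y \<in> A" using gA \<open>x \<in> B\<close> \<open>y \<in> B\<close> sf(3) by blast
    ultimately show "x + y \<in> B" using ap by simp
  qed
  show Bsc: "\<And>c x. c \<in> Fq \<Longrightarrow> x \<in> B \<Longrightarrow> sc c x \<in> B"
  proof -
    fix c x assume "c \<in> Fq" "x \<in> B"
    then have "sc c x = p (c * inv_into A p x)" using s gA pg by simp
    moreover have "c * inv_into A p x \<in> A" using gA \<open>x \<in> B\<close> \<open>c \<in> Fq\<close> FA sf(4) by blast
    ultimately show "sc c x \<in> B" using ap by simp
  qed
  show "\<And>x y. x \<in> B \<Longrightarrow> y \<in> B \<Longrightarrow> inv_into A p (x + y) = inv_into A p x + inv_into A p y"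
  proof -
    fix x y assume "x \<in> B" "y \<in> B"
    then have "x + y = p (inv_into A p x + inv_into A p y)" using a gA pg by simp
    moreover have "inv_into A p x + inv_into A p y \<in> A" using gA \<open>x \<in> B\<close> \<open>y \<in> B\<close> sf(3) by blast
    ultimately show "inv_into A p (x + y) = inv_into A p x + inv_into A p y" using gp by simp
  qed
  show "\<And>c x. c \<in> Fq \<Longrightarrow> x \<in> B \<Longrightarrow> inv_into A p (sc c x) = c * inv_into A p x"
  proof -
    fix c x assume "c \<in> Fq" "x \<in> B"
    then have "sc c x = p (c * inv_into A p x)" using s gA pg by simp
    moreover have "c * inv_into A p x \<in> A" using gA \<open>x \<in> B\<close> \<open>c \<in> Fq\<close> FA sf(4) by blast
    ultimately show "inv_into A p (sc c x) = c * inv_into A p x" using gp by simp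
  qed
  show "inv_into A p 0 = 0" using gp[OF sf(1)] p0 by simp
qed

lemma lift_props:
  fixes p :: "'a::field \<Rightarrow> 'a \<times> 'a"
  assumes bij: "bij_betw p A B" and SA: "is_subfield A" and FA: "Fq \<subseteq> A"
    and add: "\<forall>x\<in>A. \<forall>y\<in>A. p (x + y) = (fst (p x) + fst (p y), snd (p x) + snd (p y))"
    and scal: "\<forall>c\<in>Fq. \<forall>x\<in>A. p (c * x) = (c * fst (p x), c * snd (p x))"
    and V': "fq_subspace Fq V'" "V' \<subseteq> B" and Z: "(0::'a) \<in> Z"
  shows "fq_subspace Fq ({0::'a} \<times> inv_into A p ` V')" "{0::'a} \<times> inv_into A p ` V' \<subseteq> Z \<times> A"
proof -
  note L = phi_lin[OF bij SA FA add scal]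
  show "{0::'a} \<times> inv_into A p ` V' \<subseteq> Z \<times> A" using Z L(5) V'(2) by auto
  show "fq_subspace Fq ({0::'a} \<times> inv_into A p ` V')"
    unfolding fq_subspace_iff
  proof (intro conjI ballI)
    show "0 \<in> {0::'a} \<times> inv_into A p ` V'"
      using V'(1) L(12) by (force simp: fq_subspace_iff zero_prod_def)
  next
    fix u v assume "u \<in> {0::'a} \<times> inv_into A p ` V'" "v \<in> {0::'a} \<times> inv_into A p ` V'"
    then obtain x y where xy: "x \<in> V'" "y \<in> V'" "u = (0, inv_into A p x)" "v = (0, inv_into A p y)" by auto
    moreover have "inv_into A p (x + y) = inv_into A p x + inv_into A p y"
      using L(10)[of x y] xy V'(2) by blast
    ultimately have "u + v = (0, inv_into A p (x + y))" by simp
    moreover have "x + y \<in> V'" using xy V'(1) by (auto simp: fq_subspace_iff)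
    ultimately show "u + v \<in> {0::'a} \<times> inv_into A p ` V'" by auto
  next
    fix c u assume c: "c \<in> Fq" "u \<in> {0::'a} \<times> inv_into A p ` V'"
    then obtain x where x: "x \<in> V'" "u = (0, inv_into A p x)" by auto
    moreover have "inv_into A p (sc c x) = c * inv_into A p x"
      using L(11)[of c x] x c V'(2) by blast
    ultimately have "sc c u = (0, inv_into A p (sc c x))" by (simp add: sc_def)
    moreover have "sc c x \<in> V'" using x c V'(1) by (auto simp: fq_subspace_iff)
    ultimately show "sc c u \<in> {0::'a} \<times> inv_into A p ` V'" by auto
  qed
qed

definition good where
  "good Fq F \<alpha> \<phi> DK l k m \<longleftrightarrow> finite Fq \<and> is_subfield Fq \<and>
    (\<forall>j\<in>levels m l. is_subfield (F j) \<and> Fq \<subseteq> F j \<and> finite (F j) \<and>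
       (\<forall>i<l. \<alpha> j i \<in> F j) \<and> fq_indep Fq l (\<alpha> j) \<and>
       (2 * l \<le> j \<longrightarrow>
               bij_betw (\<phi> j) (F j) (ambient Fq (F (j - l)) l (\<alpha> (j - l))) \<and>
               (\<forall>x\<in>F j. \<forall>y\<in>F j. \<phi> j (x + y) =
                   (fst (\<phi> j x) + fst (\<phi> j y), snd (\<phi> j x) + snd (\<phi> j y))) \<and>
               (\<forall>c\<in>Fq. \<forall>x\<in>F j. \<phi> j (c * x) = (c * fst (\<phi> j x), c * snd (\<phi> j x)))) \<and>
       (\<forall>X. fq_subspace Fq X \<longrightarrow> X \<subseteq> ambient Fq (F j) l (\<alpha> j) \<longrightarrow>
               (\<forall>Y\<in>KK_code Fq (F j) l (\<alpha> j) k.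
                   subspace_dist Fq X Y < int l - int k + 1 \<longrightarrow> DK j X = Some Y) \<and>
               ((\<forall>Y\<in>KK_code Fq (F j) l (\<alpha> j) k.
                   \<not> subspace_dist Fq X Y < int l - int k + 1) \<longrightarrow> DK j X = None)))"

lemma levels_step: "j \<in> levels m l \<Longrightarrow> 2 * l \<le> j \<Longrightarrow> j - l \<in> levels m l"
proof -
  assume "j \<in> levels m l" "2 * l \<le> j"
  then obtain i where i: "i * l + l \<le> m" "j = m - i * l" unfolding levels_def by blast
  have "Suc i * l + l \<le> m" "j - l = m - Suc i * l" using i \<open>2 * l \<le> j\<close> by auto
  then show ?thesis unfolding levels_def by blast
qed

lemma levels_top: "l \<le> m \<Longrightarrow> m \<in> levels m l"
  unfolding levels_def by (rule CollectI, rule exI[of _ 0]) simp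

lemma levels_sub: "2 * l \<le> m \<Longrightarrow> levels (m - l) l \<subseteq> levels m l"
proof
  fix j assume "2 * l \<le> m" "j \<in> levels (m - l) l"
  then obtain i where i: "i * l + l \<le> m - l" "j = m - l - i * l" unfolding levels_def by blast
  have "Suc i * l + l \<le> m" "j = m - Suc i * l" using i \<open>2 * l \<le> m\<close> by auto
  then show "j \<in> levels m l" unfolding levels_def by blast
qed

lemma good_sub: "good Fq F \<alpha> \<phi> DK l k m \<Longrightarrow> 2 * l \<le> m \<Longrightarrow> good Fq F \<alpha> \<phi> DK l k (m - l)"
  unfolding good_def using levels_sub by blast

lemma rec_code_sub:
  assumes G: "good Fq F \<alpha> \<phi> DK l k m"
  shows "j \<in> levels m l \<Longrightarrow> Y \<in> rec_code Fq F \<alpha> \<phi> l k j \<Longrightarrow>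
           fq_subspace Fq Y \<and> Y \<subseteq> ambient Fq (F j) l (\<alpha> j)"
proof (induction j arbitrary: Y rule: less_induct)
  case (less j)
  have SF: "is_subfield Fq" "finite Fq" using G by (auto simp: good_def)
  have Gj: "is_subfield (F j)" "Fq \<subseteq> F j" "finite (F j)" "\<forall>i<l. \<alpha> j i \<in> F j" "fq_indep Fq l (\<alpha> j)"
    using G less.prems(1) by (auto simp: good_def)
  have KK: "fq_subspace Fq Y \<and> Y \<subseteq> ambient Fq (F j) l (\<alpha> j)" if "Y \<in> KK_code Fq (F j) l (\<alpha> j) k" for Y
  proof -
    from that obtain f where f: "\<forall>i<k. f i \<in> F j" "Y = KK_E Fq l (\<alpha> j) k f"
      unfolding KK_code_def by blast
    show ?thesis using KK_E_props[OF SF Gj f(1)] f(2) by simp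
  qed
  show ?case
  proof (cases "0 < l \<and> 2 * l \<le> j")
    case False
    have "Y \<in> KK_code Fq (F j) l (\<alpha> j) k" using less.prems(2)
      unfolding rec_code.simps[of _ _ _ _ _ _ j] if_not_P[OF False] .
    then show ?thesis by (rule KK)
  next
    case True
    from less.prems(2) True have "Y \<in> KK_code Fq (F j) l (\<alpha> j) k \<or>
       (\<exists>U. Y = {0} \<times> (inv_into (F j) (\<phi> j) ` U) \<and> U \<in> rec_code Fq F \<alpha> \<phi> l k (j - l))"
      unfolding rec_code.simps[of _ _ _ _ _ _ j] if_P[OF True] by blast
    then show ?thesis
    proof
      assume "Y \<in> KK_code Fq (F j) l (\<alpha> j) k" then show ?thesis by (rule KK)
    next
      assume "\<exists>U. Y = {0} \<times> (inv_into (F j) (\<phi> j) ` U) \<and> U \<in> rec_code Fq F \<alpha> \<phi> l k (j - l)"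
      then obtain U where U: "Y = {0} \<times> (inv_into (F j) (\<phi> j) ` U)" "U \<in> rec_code Fq F \<alpha> \<phi> l k (j - l)"
        by blast
      have lv: "j - l \<in> levels m l" using levels_step[OF less.prems(1)] True by blast
      have IH: "fq_subspace Fq U \<and> U \<subseteq> ambient Fq (F (j - l)) l (\<alpha> (j - l))"
        using less.IH[OF _ lv U(2)] True by simp
      have P: "bij_betw (\<phi> j) (F j) (ambient Fq (F (j - l)) l (\<alpha> (j - l)))"
               "(\<forall>x\<in>F j. \<forall>y\<in>F j. \<phi> j (x + y) =
                   (fst (\<phi> j x) + fst (\<phi> j y), snd (\<phi> j x) + snd (\<phi> j y)))"
               "(\<forall>c\<in>Fq. \<forall>x\<in>F j. \<phi> j (c * x) = (c * fst (\<phi> j x), c * snd (\<phi> j x)))"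
        using G less.prems(1) True by (auto simp: good_def)
      have z: "0 \<in> span_A Fq l (\<alpha> j)" using zero_span_A subfield_facts(1)[OF SF(1)] by blast
      show ?thesis using lift_props[OF P(1) Gj(1,2) P(2,3) conjunct1[OF IH] conjunct2[OF IH] z] U(1)
        by (simp add: ambient_def)
    qed
  qed
qed



lemma subspace_Int: "fq_subspace Fq A \<Longrightarrow> fq_subspace Fq B \<Longrightarrow> fq_subspace Fq (A \<inter> B)"
  by (auto simp: fq_subspace_iff)

lemma main:
  assumes "good Fq F \<alpha> \<phi> DK l k m" "1 \<le> k" "k \<le> l" "l \<le> m"
    "V \<in> rec_code Fq F \<alpha> \<phi> l k m"
    "fq_subspace Fq U" "U \<subseteq> ambient Fq (F m) l (\<alpha> m)"
    "int l + int (fq_dim Fq U) - 2 * int (fq_dim Fq (U \<inter> V)) < int l - int k + 1"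
  shows "rec_dec F \<phi> l DK m U = Some V"
  using assms
proof (induction m arbitrary: U V rule: less_induct)
  case (less m)
  note G = less.prems(1)
  have SF: "is_subfield Fq" "finite Fq" using G by (auto simp: good_def)
  have lm: "m \<in> levels m l" using levels_top less.prems(4) by blast
  have Gm: "is_subfield (F m)" "Fq \<subseteq> F m" "finite (F m)" "\<forall>i<l. \<alpha> m i \<in> F m" "fq_indep Fq l (\<alpha> m)"
    using G lm by (auto simp: good_def)
  have DKs: "\<And>X. fq_subspace Fq X \<Longrightarrow> X \<subseteq> ambient Fq (F m) l (\<alpha> m) \<Longrightarrow>
               (\<forall>Y\<in>KK_code Fq (F m) l (\<alpha> m) k.
                   subspace_dist Fq X Y < int l - int k + 1 \<longrightarrow> DK m X = Some Y) \<and>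
               ((\<forall>Y\<in>KK_code Fq (F m) l (\<alpha> m) k.
                   \<not> subspace_dist Fq X Y < int l - int k + 1) \<longrightarrow> DK m X = None)"
    using G lm unfolding good_def by blast
  have amb: "ambient Fq (F m) l (\<alpha> m) \<subseteq> F m \<times> F m" using ambient_sub[OF Gm(1,2,4)] .
  have Ufin: "finite U" using less.prems(7) amb Gm(3) finite_subset[of U "F m \<times> F m"] by blast
  have Vs: "fq_subspace Fq V \<and> V \<subseteq> ambient Fq (F m) l (\<alpha> m)"
    using rec_code_sub[OF G lm less.prems(5)] .
  have Vfin: "finite V" using Vs amb Gm(3) finite_subset[of V "F m \<times> F m"] by blast
  have UVs: "fq_subspace Fq (U \<inter> V)" using subspace_Int less.prems(6) Vs by blast
  have UVfin: "finite (U \<inter> V)" using Ufin by simp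
  show ?case
  proof (cases "V \<in> KK_code Fq (F m) l (\<alpha> m) k")
    case True
    then obtain f where f: "\<forall>i<k. f i \<in> F m" "V = KK_E Fq l (\<alpha> m) k f"
      unfolding KK_code_def by blast
    have dV: "fq_dim Fq V = l" using KK_E_props(4)[OF SF Gm f(1)] f(2) by simp
    have "subspace_dist Fq U V < int l - int k + 1"
      unfolding subspace_dist_def using dV less.prems(8) by simp
    then have "DK m U = Some V" using DKs[OF less.prems(6,7)] True by blast
    then show ?thesis by (subst rec_dec.simps) simp
  next
    case False
    have cond: "0 < l \<and> 2 * l \<le> m"
    proof (rule ccontr)
      assume nc: "\<not> (0 < l \<and> 2 * l \<le> m)"
      have "V \<in> KK_code Fq (F m) l (\<alpha> m) k" using less.prems(5)
        unfolding rec_code.simps[of _ _ _ _ _ _ m] if_not_P[OF nc] .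
      then show False using False by simp
    qed
    then obtain V' where V': "V = {0} \<times> (inv_into (F m) (\<phi> m) ` V')" "V' \<in> rec_code Fq F \<alpha> \<phi> l k (m - l)"
      using less.prems(5) False unfolding rec_code.simps[of _ _ _ _ _ _ m] if_P[OF cond] by blast
    define B where "B = ambient Fq (F (m - l)) l (\<alpha> (m - l))"
    define g where "g = inv_into (F m) (\<phi> m)"
    have P: "bij_betw (\<phi> m) (F m) B"
               "(\<forall>x\<in>F m. \<forall>y\<in>F m. \<phi> m (x + y) =
                   (fst (\<phi> m x) + fst (\<phi> m y), snd (\<phi> m x) + snd (\<phi> m y)))"
               "(\<forall>c\<in>Fq. \<forall>x\<in>F m. \<phi> m (c * x) = (c * fst (\<phi> m x), c * snd (\<phi> m x)))"
      using G lm cond unfolding good_def B_def by auto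
    note L = phi_lin[OF P(1) Gm(1,2) P(2,3), folded g_def]
    have lv: "m - l \<in> levels m l" using levels_step[OF lm] cond by blast
    have V's: "fq_subspace Fq V' \<and> V' \<subseteq> B"
      using rec_code_sub[OF G lv V'(2)] unfolding B_def .
    have fstV: "\<And>x. x \<in> V \<Longrightarrow> fst x = 0" using V'(1) by auto
    have sndV: "\<And>x. x \<in> V \<Longrightarrow> snd x \<in> F m" using V'(1) V's L(5) g_def by auto
    have none: "DK m U = None"
    proof -
      have "\<forall>Y\<in>KK_code Fq (F m) l (\<alpha> m) k. \<not> subspace_dist Fq U Y < int l - int k + 1"
      proof
        fix Y assume "Y \<in> KK_code Fq (F m) l (\<alpha> m) k"
        then obtain f where f: "\<forall>i<k. f i \<in> F m" "Y = KK_E Fq l (\<alpha> m) k f"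
          unfolding KK_code_def by blast
        note KY = KK_E_props[OF SF Gm f(1), folded f(2)]
        define A where "A = U \<inter> Y"
        define C where "C = U \<inter> V"
        have As: "fq_subspace Fq A" "finite A" using subspace_Int less.prems(6) KY(2) Ufin
          unfolding A_def by auto
        have inj: "inj_on (\<lambda>(a, b). a + b) (A \<times> C)"
        proof (rule inj_onI, clarify)
          fix a b a' b' assume a: "a \<in> A" "b \<in> C" "a' \<in> A" "b' \<in> C" "a + b = a' + b'"
          have "a - a' = b' - b" using a(5) by (simp add: algebra_simps)
          moreover have "a - a' \<in> Y" using subspace_minus[OF SF(1) KY(2)] a unfolding A_def by blast
          moreover have "b' - b \<in> V" using subspace_minus[OF SF(1) conjunct1[OF Vs]] a unfolding C_def by blast
          ultimately have "a - a' = 0" using KY(5) fstV by metis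
          then show "a = a' \<and> b = b'" using a(5) by simp
        qed
        have img: "(\<lambda>(a, b). a + b) ` (A \<times> C) \<subseteq> U"
        proof
          fix z assume "z \<in> (\<lambda>(a, b). a + b) ` (A \<times> C)"
          then obtain a b where "a \<in> U" "b \<in> U" "z = a + b" unfolding A_def C_def by auto
          then show "z \<in> U" using less.prems(6) unfolding fq_subspace_iff by blast
        qed
        have "card A * card C \<le> card U"
          using card_inj_on_le[OF inj img Ufin] by (simp add: card_cartesian_product)
        then have "card Fq ^ (fq_dim Fq A + fq_dim Fq C) \<le> card Fq ^ fq_dim Fq U"
          using dim_card[OF SF As] dim_card[OF SF UVs UVfin] dim_card[OF SF less.prems(6) Ufin]
          unfolding C_def by (simp add: power_add)
        then have le: "fq_dim Fq A + fq_dim Fq C \<le> fq_dim Fq U"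
          using card_Fq_ge2[OF SF] by (intro power_le_imp_le_exp) auto
        show "\<not> subspace_dist Fq U Y < int l - int k + 1"
          unfolding subspace_dist_def using le KY(4) less.prems(2,8)
          unfolding A_def C_def by linarith
      qed
      then show ?thesis using DKs[OF less.prems(6,7)] by blast
    qed
    define U' where "U' = \<phi> m ` (snd ` U)"
    have sndU: "\<And>x. x \<in> U \<Longrightarrow> snd x \<in> F m" using less.prems(7) amb by auto
    have ap: "\<And>x. x \<in> F m \<Longrightarrow> \<phi> m x \<in> B" by (rule bij_betw_apply[OF P(1)])
    have U'sub: "U' \<subseteq> B" unfolding U'_def using sndU ap by auto
    have U's: "fq_subspace Fq U'"
      unfolding fq_subspace_iff
    proof (intro conjI ballI)
      have "0 \<in> U" using less.prems(6) by (simp add: fq_subspace_iff)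
      then show "0 \<in> U'" unfolding U'_def using L(3) by force
    next
      fix u v assume "u \<in> U'" "v \<in> U'"
      then obtain x y where xy: "x \<in> U" "y \<in> U" "u = \<phi> m (snd x)" "v = \<phi> m (snd y)"
        unfolding U'_def by auto
      have "u + v = \<phi> m (snd (x + y))" using xy L(1) sndU by simp
      moreover have "x + y \<in> U" using xy less.prems(6) by (simp add: fq_subspace_iff)
      ultimately show "u + v \<in> U'" unfolding U'_def by blast
    next
      fix c u assume c: "c \<in> Fq" "u \<in> U'"
      then obtain x where x: "x \<in> U" "u = \<phi> m (snd x)" unfolding U'_def by auto
      have "sc c u = \<phi> m (snd (sc c x))" using x c L(2) sndU by simp
      moreover have "sc c x \<in> U" using x c less.prems(6) by (simp add: fq_subspace_iff)
      ultimately show "sc c u \<in> U'" unfolding U'_def by blast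
    qed
    have U'fin: "finite U'" unfolding U'_def using Ufin by simp
    have cU': "card U' \<le> card U" unfolding U'_def
      using card_image_le[OF Ufin, of snd] card_image_le[of "snd ` U" "\<phi> m"] Ufin by simp
    have dU': "fq_dim Fq U' \<le> fq_dim Fq U"
      by (rule dim_le_by_card[OF SF U's U'fin less.prems(6) Ufin cU'])
    define W where "W = U' \<inter> V'"
    have Ws: "fq_subspace Fq W" "finite W" unfolding W_def using subspace_Int U's V's U'fin by auto
    have injpsi: "inj_on (\<lambda>x. \<phi> m (snd x)) (U \<inter> V)"
    proof (rule inj_onI)
      fix x y assume a: "x \<in> U \<inter> V" "y \<in> U \<inter> V" "\<phi> m (snd x) = \<phi> m (snd y)"
      have "snd x = snd y" using a sndV bij_betw_imp_inj_on[OF P(1)] by (meson IntD2 inj_onD)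
      moreover have "fst x = fst y" using a fstV by simp
      ultimately show "x = y" by (simp add: prod_eq_iff)
    qed
    have imgpsi: "(\<lambda>x. \<phi> m (snd x)) ` (U \<inter> V) \<subseteq> W"
    proof
      fix z assume "z \<in> (\<lambda>x. \<phi> m (snd x)) ` (U \<inter> V)"
      then obtain x where x: "x \<in> U" "x \<in> V" "z = \<phi> m (snd x)" by auto
      have "z \<in> U'" unfolding U'_def using x by auto
      moreover obtain v where v: "v \<in> V'" "x = (0, g v)" using x(2) V'(1) g_def by auto
      then have "v \<in> B" using V's by blast
      then have "z = v" using x(3) L(6)[of v] v by simp
      ultimately show "z \<in> W" unfolding W_def using v by simp
    qed
    have "card (U \<inter> V) \<le> card W" using card_inj_on_le[OF injpsi imgpsi Ws(2)] .
    then have dW: "fq_dim Fq (U \<inter> V) \<le> fq_dim Fq W"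
      by (rule dim_le_by_card[OF SF UVs UVfin Ws])
    have rec: "rec_dec F \<phi> l DK (m - l) U' = Some V'"
    proof (rule less.IH)
      show "m - l < m" using cond less.prems(4) by simp
      show "good Fq F \<alpha> \<phi> DK l k (m - l)" using good_sub[OF G] cond by simp
      show "1 \<le> k" "k \<le> l" "l \<le> m - l" using less.prems(2,3) cond by auto
      show "V' \<in> rec_code Fq F \<alpha> \<phi> l k (m - l)" by (rule V'(2))
      show "fq_subspace Fq U'" by (rule U's)
      show "U' \<subseteq> ambient Fq (F (m - l)) l (\<alpha> (m - l))" using U'sub B_def by simp
      show "int l + int (fq_dim Fq U') - 2 * int (fq_dim Fq (U' \<inter> V')) < int l - int k + 1"
        using less.prems(8) dU' dW unfolding W_def by linarith
    qed
    show ?thesis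
      by (subst rec_dec.simps) (simp add: none cond rec[unfolded U'_def] V'(1))
  qed
qed


theorem mainTheorem4:
  fixes Fq :: "'a::field set"
    and F :: "nat \<Rightarrow> 'a set"
    and \<alpha> :: "nat \<Rightarrow> nat \<Rightarrow> 'a"
    and \<phi> :: "nat \<Rightarrow> 'a \<Rightarrow> 'a \<times> 'a"
    and DK :: "nat \<Rightarrow> ('a \<times> 'a) set \<Rightarrow> ('a \<times> 'a) set option"
    and m l k :: nat
    and \<kappa> \<gamma> :: int
    and U V :: "('a \<times> 'a) set"
  assumes params: "1 \<le> k" "k \<le> l" "l \<le> m"
    and Fq: "finite Fq" "is_subfield Fq"
    and Fj: "\<And>j. j \<in> levels m l \<Longrightarrow>
               is_subfield (F j) \<and> Fq \<subseteq> F j \<and> finite (F j) \<and> card (F j) = card Fq ^ j"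
    and alpha: "\<And>j. j \<in> levels m l \<Longrightarrow>
               (\<forall>i<l. \<alpha> j i \<in> F j) \<and> fq_indep Fq l (\<alpha> j)"
    and phi: "\<And>j. j \<in> levels m l \<Longrightarrow> 2 * l \<le> j \<Longrightarrow>
               bij_betw (\<phi> j) (F j) (ambient Fq (F (j - l)) l (\<alpha> (j - l))) \<and>
               (\<forall>x\<in>F j. \<forall>y\<in>F j. \<phi> j (x + y) =
                   (fst (\<phi> j x) + fst (\<phi> j y), snd (\<phi> j x) + snd (\<phi> j y))) \<and>
               (\<forall>c\<in>Fq. \<forall>x\<in>F j. \<phi> j (c * x) = (c * fst (\<phi> j x), c * snd (\<phi> j x)))"
    and DK_spec: "\<And>j X. j \<in> levels m l \<Longrightarrow> fq_subspace Fq X \<Longrightarrow>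
               X \<subseteq> ambient Fq (F j) l (\<alpha> j) \<Longrightarrow>
               (\<forall>Y\<in>KK_code Fq (F j) l (\<alpha> j) k.
                   subspace_dist Fq X Y < int l - int k + 1 \<longrightarrow> DK j X = Some Y) \<and>
               ((\<forall>Y\<in>KK_code Fq (F j) l (\<alpha> j) k.
                   \<not> subspace_dist Fq X Y < int l - int k + 1) \<longrightarrow> DK j X = None)"
    and V: "V \<in> rec_code Fq F \<alpha> \<phi> l k m"
    and U: "fq_subspace Fq U" "U \<subseteq> ambient Fq (F m) l (\<alpha> m)"
    and dimU: "int (fq_dim Fq U) = int l - \<kappa> + \<gamma>"
    and dimUV: "int (fq_dim Fq (U \<inter> V)) = int l - \<kappa>"
    and small: "\<kappa> + \<gamma> < int l - int k + 1"
  shows "rec_dec F \<phi> l DK m U = Some V"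
proof -
  have G: "good Fq F \<alpha> \<phi> DK l k m"
    unfolding good_def
    apply (intro conjI ballI allI impI)
    using Fq apply simp
    using Fq apply simp
    using Fj apply blast
    using Fj apply blast
    using Fj apply blast
    using alpha apply blast
    using alpha apply blast
    using phi apply blast
    using phi apply blast
    using phi apply blast
    using DK_spec apply blast
    using DK_spec apply blast
    done
  show ?thesis
    by (rule main[OF G params V U]) (use dimU dimUV small in linarith)
qed

end
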